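(* Let $c,d\in\mathbb{N}$ and $I=\mathbb{N}^d\times[c]$. Then every $\mathrm{Sym}$-invariant lattice $L\subseteq\mathbb{Z}^{(I)}$ has a finite equivariant generating set, i.e. there is a finite set $\mathcal{B}\subseteq L$ such that $L$ is generated as an abelian group by $\mathrm{Sym}(\mathcal{B})=\{\sigma(\mathbf{u})\mid\sigma\in\mathrm{Sym},\mathbf{u}\in\mathcal{B}\}$.
   Context: $\mathbb{N}=\{1,2,\dots\}$, $[c]=\{1,\dots,c\}$. $\mathbb{Z}^{(I)}$ is the free abelian group with basis $I$ (finitely supported integer vectors indexed by $I$), with standard basis $\mathbf{e}_{\mathbf{i},j}$, $\mathbf{i}\in\mathbb{N}^d$, $j\in[c]$; a lattice is any subgroup of $\mathbb{Z}^{(I)}$. $\mathrm{Sym}$ is the group of permutations of $\mathbb{N}$ fixing all but finitely many elements; it acts on $\mathbb{Z}^{(I)}$ by the linear extension of $\sigma(\mathbf{e}_{(i_1,\dots,i_d),j})=\mathbf{e}_{(\sigma(i_1),\dots,\sigma(i_d)),j}$. A lattice $L$ is $\mathrm{Sym}$-invariant if $\sigma(L)\subseteq L$ for all $\sigma\in\mathrm{Sym}$. *)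

theory Defs
  imports Main "HOL-Library.Function_Algebras"
begin

text \<open>Indices: a multi-index i in N^d is a list of length d with entries \<ge> 1,
  paired with a colour j in [c] = {1..c}. Here N = {1,2,...}.\<close>

type_synonym idx = "nat list \<times> nat"

definition index_set :: "nat \<Rightarrow> nat \<Rightarrow> idx set" where
  "index_set c d = {(is, j). length is = d \<and> (\<forall>i\<in>set is. 1 \<le> i) \<and> 1 \<le> j \<and> j \<le> c}"

definition free_ab :: "idx set \<Rightarrow> (idx \<Rightarrow> int) set" where
  "free_ab I = {v. finite {x. v x \<noteq> 0} \<and> {x. v x \<noteq> 0} \<subseteq> I}"

definition is_lattice :: "idx set \<Rightarrow> (idx \<Rightarrow> int) set \<Rightarrow> bool" where
  "is_lattice I L \<longleftrightarrow> L \<subseteq> free_ab I \<and> 0 \<in> L \<and>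
     (\<forall>u\<in>L. \<forall>v\<in>L. u + v \<in> L) \<and> (\<forall>u\<in>L. - u \<in> L)"

text \<open>Sym: permutations of N = {1,2,...} fixing all but finitely many elements
  (encoded as bijections of nat fixing 0).\<close>
definition Sym :: "(nat \<Rightarrow> nat) set" where
  "Sym = {\<sigma>. bij \<sigma> \<and> \<sigma> 0 = 0 \<and> finite {i. \<sigma> i \<noteq> i}}"

text \<open>Linear extension of sigma(e_{(i1..id),j}) = e_{(sigma i1,..,sigma id),j}:
  (sigma v)(sigma i, j) = v(i, j).\<close>
definition sym_act :: "(nat \<Rightarrow> nat) \<Rightarrow> (idx \<Rightarrow> int) \<Rightarrow> (idx \<Rightarrow> int)" where
  "sym_act \<sigma> v = (\<lambda>(is, j). v (map (inv \<sigma>) is, j))"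

definition sym_invariant :: "(idx \<Rightarrow> int) set \<Rightarrow> bool" where
  "sym_invariant L \<longleftrightarrow> (\<forall>\<sigma>\<in>Sym. sym_act \<sigma> ` L \<subseteq> L)"

definition int_span :: "(idx \<Rightarrow> int) set \<Rightarrow> (idx \<Rightarrow> int) set" where
  "int_span S = {v. \<exists>F a. finite F \<and> F \<subseteq> S \<and> v = (\<Sum>u\<in>F. (\<lambda>x. a u * u x))}"

definition Sym_orbit :: "(idx \<Rightarrow> int) set \<Rightarrow> (idx \<Rightarrow> int) set" where
  "Sym_orbit B = {sym_act \<sigma> u | \<sigma> u. \<sigma> \<in> Sym \<and> u \<in> B}"

end

theory Submission
  imports Defs "HOL-Library.FuncSet" "HOL-Combinatorics.Permutations"
begin


definition TO :: "(idx \<times> idx) set" where "TO = lenlex less_than <*lex*> less_than"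

lemma wf_TO: "wf TO" unfolding TO_def by (intro wf_lex_prod wf_lenlex wf_less_than)
lemma trans_TO: "trans TO" unfolding TO_def
  by (intro trans_lex_prod lenlex_transI trans_less_than)
lemma total_TO: "total TO" unfolding TO_def
  by (intro total_lex_prod total_lenlex total_less_than)
lemma total_TO': "x \<noteq> y \<Longrightarrow> (x,y) \<in> TO \<or> (y,x) \<in> TO"
  using total_TO unfolding total_on_def by blast
lemma irrefl_TO: "(x,x) \<notin> TO" using wf_TO by (meson wf_not_refl)
lemma asym_TO: "(x,y) \<in> TO \<Longrightarrow> (y,x) \<notin> TO" using wf_TO by (meson wf_not_sym)

lemma TO_map:
  assumes "(x,y) \<in> TO" "strict_mono \<pi>"
  shows "((map \<pi> (fst x), snd x), (map \<pi> (fst y), snd y)) \<in> TO"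
proof -
  have sm: "\<pi> a < \<pi> b \<longleftrightarrow> a < b" for a b using assms(2) by (simp add: strict_mono_less)
  have inj: "map \<pi> xs = map \<pi> ys \<longleftrightarrow> xs = ys" for xs ys
    using strict_mono_imp_inj_on[OF assms(2)] by (simp add: inj_map_eq_map)
  have "(map \<pi> (fst x), map \<pi> (fst y)) \<in> lenlex less_than" if h: "(fst x, fst y) \<in> lenlex less_than"
  proof -
    from h consider "length (fst x) < length (fst y)" | "length (fst x) = length (fst y)"
      "\<exists>xys a b xs' ys'. fst x = xys @ a # xs' \<and> fst y = xys @ b # ys' \<and> a < b"
      by (auto simp: lenlex_conv lex_conv)
    then show ?thesis
    proof cases
      case 1 then show ?thesis by (simp add: lenlex_conv)
    next
      case 2
      then obtain xys a b xs' ys' where e: "fst x = xys @ a # xs'" "fst y = xys @ b # ys'" "a < b" by blast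
      have "length xs' = length ys'" using 2(1) e by simp
      have "map \<pi> (fst x) = map \<pi> xys @ \<pi> a # map \<pi> xs'"
        "map \<pi> (fst y) = map \<pi> xys @ \<pi> b # map \<pi> ys'" "\<pi> a < \<pi> b" using sm e by auto
      then show ?thesis using 2(1) \<open>length xs' = length ys'\<close> unfolding lenlex_conv lex_conv by auto

    qed
  qed
  then show ?thesis using assms(1) by (cases x, cases y) (auto simp: TO_def inj)
qed

definition supp :: "(idx \<Rightarrow> int) \<Rightarrow> idx set" where "supp v = {x. v x \<noteq> 0}"

definition is_lt :: "(idx \<Rightarrow> int) \<Rightarrow> idx \<Rightarrow> bool" where
  "is_lt v b \<longleftrightarrow> v b \<noteq> 0 \<and> (\<forall>x. v x \<noteq> 0 \<longrightarrow> x = b \<or> (x,b) \<in> TO)"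

lemma is_lt_unique: "is_lt v a \<Longrightarrow> is_lt v b \<Longrightarrow> a = b"
  unfolding is_lt_def using asym_TO by blast

lemma finite_max_TO:
  assumes "finite S" "S \<noteq> {}"
  shows "\<exists>m\<in>S. \<forall>x\<in>S. x = m \<or> (x,m) \<in> TO"
  using assms
proof (induction S rule: finite_ne_induct)
  case (singleton x) then show ?case by auto
next
  case (insert y S)
  then obtain m where m: "m \<in> S" "\<forall>x\<in>S. x = m \<or> (x,m) \<in> TO" by blast
  show ?case
  proof (cases "(y,m) \<in> TO")
    case True then show ?thesis using m by auto
  next
    case False
    then have "y = m \<or> (m,y) \<in> TO" using total_TO' by blast
    then show ?thesis using m trans_TO insert by (auto dest: transD)
  qed
qed

lemma exists_lt:
  assumes "finite (supp v)" "v \<noteq> 0"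
  shows "\<exists>b. is_lt v b"
proof -
  have "supp v \<noteq> {}" using assms(2) by (auto simp: supp_def fun_eq_iff)
  then obtain m where "m \<in> supp v" "\<forall>x\<in>supp v. x = m \<or> (x,m) \<in> TO"
    using finite_max_TO[OF assms(1)] by blast
  then show ?thesis unfolding is_lt_def supp_def by (intro exI[of _ m]) auto
qed

lemma is_lt_below:
  assumes "\<forall>x. z x \<noteq> 0 \<longrightarrow> x = b \<or> (x,b) \<in> TO" "finite (supp z)" "z \<noteq> 0"
  shows "\<exists>b'. is_lt z b' \<and> (b' = b \<or> (b',b) \<in> TO)"
proof -
  obtain b' where b': "is_lt z b'" using exists_lt assms by blast
  then have "z b' \<noteq> 0" by (simp add: is_lt_def)
  then show ?thesis using assms(1) b' by blast
qed

lemma is_lt_at: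
  assumes "\<forall>x. z x \<noteq> 0 \<longrightarrow> x = b \<or> (x,b) \<in> TO" "z b \<noteq> 0"
  shows "is_lt z b" using assms by (simp add: is_lt_def)



lemma sum_fun_apply: "(\<Sum>u\<in>F. f u) x = (\<Sum>u\<in>F. f u x)"
  by (induction F rule: infinite_finite_induct) auto

lemma lat_mult_nat:
  assumes "is_lattice I L" "v \<in> L"
  shows "(\<lambda>x. int n * v x) \<in> L"
proof (induction n)
  case 0
  have "(\<lambda>x. int 0 * v x) = 0" by (simp add: fun_eq_iff)
  then show ?case using assms by (simp add: is_lattice_def)
next
  case (Suc n)
  have "(\<lambda>x. int (Suc n) * v x) = (\<lambda>x. int n * v x) + v" by (simp add: fun_eq_iff algebra_simps)
  then show ?case using assms Suc by (simp add: is_lattice_def)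
qed

lemma lat_mult:
  assumes "is_lattice I L" "v \<in> L"
  shows "(\<lambda>x. q * v x) \<in> L"
proof (cases "q \<ge> 0")
  case True
  then have "(\<lambda>x. q * v x) = (\<lambda>x. int (nat q) * v x)" by (simp add: fun_eq_iff)
  then show ?thesis using lat_mult_nat[OF assms, of "nat q"] by metis
next
  case False
  then have e: "(\<lambda>x. q * v x) = - (\<lambda>x. int (nat (-q)) * v x)" by (simp add: fun_eq_iff)
  have "- (\<lambda>x. int (nat (-q)) * v x) \<in> L"
    using lat_mult_nat[OF assms, of "nat (-q)"] assms(1) unfolding is_lattice_def by blast
  then show ?thesis using e by metis
qed

lemma lat_lin:
  assumes "is_lattice I L" "v \<in> L" "u \<in> L"
  shows "(\<lambda>x. v x + q * u x) \<in> L"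
proof -
  have "(\<lambda>x. v x + q * u x) = v + (\<lambda>x. q * u x)" by (simp add: fun_eq_iff)
  then show ?thesis using lat_mult[OF assms(1,3), of q] assms unfolding is_lattice_def by metis
qed

lemma lat_sum:
  assumes "is_lattice I L" "finite F" "\<forall>u\<in>F. f u \<in> L"
  shows "sum f F \<in> L"
  using assms(2,3)
proof (induction F rule: finite_induct)
  case empty then show ?case using assms(1) unfolding is_lattice_def by (simp add: zero_fun_def)
next
  case (insert x F) then show ?case using assms(1) unfolding is_lattice_def sum.insert[OF insert(1,2)] by blast
qed

lemma span_zero: "0 \<in> int_span S"
  unfolding int_span_def by (rule CollectI, rule exI[of _ "{}"]) simp

lemma span_add:
  assumes "v \<in> int_span S" "u \<in> S"
  shows "(\<lambda>x. v x + q * u x) \<in> int_span S"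
proof -
  obtain F a where F: "finite F" "F \<subseteq> S" "v = (\<Sum>w\<in>F. (\<lambda>x. a w * w x))"
    using assms(1) unfolding int_span_def by blast
  show ?thesis
  proof (cases "u \<in> F")
    case True
    define a' where "a' = a(u := a u + q)"
    have "(\<lambda>x. v x + q * u x) = (\<Sum>w\<in>F. (\<lambda>x. a' w * w x))"
    proof
      fix x
      have "(\<Sum>w\<in>F. a' w * w x) = a' u * u x + (\<Sum>w\<in>F-{u}. a' w * w x)"
        using True F(1) by (simp add: sum.remove)
      also have "(\<Sum>w\<in>F-{u}. a' w * w x) = (\<Sum>w\<in>F-{u}. a w * w x)"
        by (rule sum.cong) (auto simp: a'_def)
      also have "v x = a u * u x + (\<Sum>w\<in>F-{u}. a w * w x)"
        using True F by (simp add: sum_fun_apply sum.remove)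
      ultimately show "v x + q * u x = (\<Sum>w\<in>F. (\<lambda>x. a' w * w x)) x"
        by (simp add: sum_fun_apply a'_def algebra_simps)
    qed
    then show ?thesis using F unfolding int_span_def by blast
  next
    case False
    define a' where "a' = a(u := q)"
    have "(\<lambda>x. v x + q * u x) = (\<Sum>w\<in>insert u F. (\<lambda>x. a' w * w x))"
    proof
      fix x
      have "(\<Sum>w\<in>insert u F. a' w * w x) = a' u * u x + (\<Sum>w\<in>F. a' w * w x)"
        using False F(1) by simp
      also have "(\<Sum>w\<in>F. a' w * w x) = (\<Sum>w\<in>F. a w * w x)"
        by (rule sum.cong) (use False in \<open>auto simp: a'_def\<close>)
      finally show "v x + q * u x = (\<Sum>w\<in>insert u F. (\<lambda>x. a' w * w x)) x"
        using F by (simp add: sum_fun_apply a'_def algebra_simps)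
    qed
    then show ?thesis using F assms(2) unfolding int_span_def by blast
  qed
qed

lemma span_sub:
  assumes "is_lattice I L" "S \<subseteq> L"
  shows "int_span S \<subseteq> L"
proof
  fix v assume "v \<in> int_span S"
  then obtain F a where F: "finite F" "F \<subseteq> S" "v = (\<Sum>w\<in>F. (\<lambda>x. a w * w x))"
    unfolding int_span_def by blast
  show "v \<in> L" unfolding F(3)
    by (rule lat_sum[OF assms(1) F(1)]) (use F(2) assms lat_mult in blast)
qed



lemma extend_perm:
  fixes \<pi> :: "nat \<Rightarrow> nat"
  assumes "finite U" "inj_on \<pi> U" "0 \<notin> U" "0 \<notin> \<pi> ` U"
  shows "\<exists>\<sigma>\<in>Sym. \<forall>u\<in>U. \<sigma> u = \<pi> u"
proof -
  have fi: "finite (\<pi> ` U)" using assms by simp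
  have "card (\<pi> ` U - U) = card (\<pi> ` U) - card (\<pi> ` U \<inter> U)"
    using fi by (simp add: card_Diff_subset_Int)
  also have "\<dots> = card U - card (U \<inter> \<pi> ` U)"
    using card_image[OF assms(2)] by (simp add: Int_commute)
  also have "\<dots> = card (U - \<pi> ` U)" using assms(1) by (simp add: card_Diff_subset_Int)
  finally have "card (\<pi> ` U - U) = card (U - \<pi> ` U)" .
  then obtain h where h: "bij_betw h (\<pi> ` U - U) (U - \<pi> ` U)"
    using finite_same_card_bij fi assms(1) by blast
  define \<sigma> where "\<sigma> x = (if x \<in> U then \<pi> x else if x \<in> \<pi> ` U then h x else x)" for x
  have b1: "bij_betw \<sigma> U (\<pi> ` U)"
    by (rule bij_betw_cong[of U \<pi> \<sigma>, THEN iffD1]) (use assms(2) in \<open>auto simp: \<sigma>_def bij_betw_def\<close>)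
  have b2: "bij_betw \<sigma> (\<pi> ` U - U) (U - \<pi> ` U)"
    using bij_betw_cong[of "\<pi> ` U - U" \<sigma> h] h by (simp add: \<sigma>_def)
  have "bij_betw \<sigma> (U \<union> (\<pi> ` U - U)) (\<pi> ` U \<union> (U - \<pi> ` U))"
    by (rule bij_betw_combine[OF b1 b2]) auto
  moreover have "U \<union> (\<pi> ` U - U) = U \<union> \<pi> ` U" "\<pi> ` U \<union> (U - \<pi> ` U) = U \<union> \<pi> ` U" by auto
  ultimately have b: "bij_betw \<sigma> (U \<union> \<pi> ` U) (U \<union> \<pi> ` U)" by simp
  have out: "x \<notin> U \<union> \<pi> ` U \<Longrightarrow> \<sigma> x = x" for x by (simp add: \<sigma>_def)
  have "\<sigma> permutes (U \<union> \<pi> ` U)" using bij_imp_permutes[OF b] out by blast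
  then have "bij \<sigma>" by (rule permutes_bij)
  moreover have "\<sigma> 0 = 0" using out assms(3,4) by blast
  moreover have "finite {i. \<sigma> i \<noteq> i}"
    by (rule finite_subset[of _ "U \<union> \<pi> ` U"]) (use out assms(1) in auto)
  ultimately have "\<sigma> \<in> Sym" by (simp add: Sym_def)
  moreover have "\<forall>u\<in>U. \<sigma> u = \<pi> u" by (simp add: \<sigma>_def)
  ultimately show ?thesis by blast
qed

lemma Sym_inv1: "\<sigma> \<in> Sym \<Longrightarrow> inv \<sigma> (\<sigma> x) = x"
  unfolding Sym_def by (simp add: bij_is_inj)
lemma Sym_inv2: "\<sigma> \<in> Sym \<Longrightarrow> \<sigma> (inv \<sigma> x) = x"
  unfolding Sym_def by (simp add: bij_is_surj surj_f_inv_f)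

lemma sym_act_apply: "\<sigma> \<in> Sym \<Longrightarrow> sym_act \<sigma> v (map \<sigma> xs, j) = v (xs, j)"
  unfolding sym_act_def by (simp add: Sym_inv1 comp_def)

lemma sym_act_nz:
  assumes "\<sigma> \<in> Sym" "sym_act \<sigma> v x \<noteq> 0"
  shows "\<exists>y. v y \<noteq> 0 \<and> x = (map \<sigma> (fst y), snd y)"
proof -
  obtain xs j where x: "x = (xs, j)" by force
  let ?y = "(map (inv \<sigma>) xs, j)"
  have "v ?y \<noteq> 0" using assms(2) unfolding x sym_act_def by simp
  moreover have "x = (map \<sigma> (fst ?y), snd ?y)" using Sym_inv2[OF assms(1)] x
    by (simp add: comp_def map_idI)
  ultimately show ?thesis by blast
qed

lemma transport:
  assumes "v \<in> free_ab (index_set c d)" "is_lt v a" "strict_mono \<pi>" "\<forall>n. n \<le> \<pi> n"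
  shows "\<exists>\<sigma>\<in>Sym. is_lt (sym_act \<sigma> v) (map \<pi> (fst a), snd a) \<and>
            sym_act \<sigma> v (map \<pi> (fst a), snd a) = v a"
proof -
  define U where "U = (\<Union>y\<in>supp v. set (fst y))"
  have fs: "finite (supp v)" "supp v \<subseteq> index_set c d"
    using assms(1) by (auto simp: free_ab_def supp_def)
  have "finite U" unfolding U_def using fs by auto
  moreover have "inj_on \<pi> U" using strict_mono_imp_inj_on[OF assms(3)] inj_on_subset by blast
  moreover have "0 \<notin> U" using fs(2) unfolding U_def index_set_def by force
  moreover have "0 \<notin> \<pi> ` U" using \<open>0 \<notin> U\<close> assms(4) by (metis image_iff le_0_eq)
  ultimately obtain \<sigma> where \<sigma>: "\<sigma> \<in> Sym" "\<forall>u\<in>U. \<sigma> u = \<pi> u" using extend_perm by blast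
  have mp: "map \<sigma> (fst y) = map \<pi> (fst y)" if "v y \<noteq> 0" for y
    using \<sigma>(2) that unfolding U_def supp_def by (cases y) auto
  have av: "v a \<noteq> 0" using assms(2) by (simp add: is_lt_def)
  let ?b = "(map \<pi> (fst a), snd a)"
  have vb: "sym_act \<sigma> v ?b = v a"
    using sym_act_apply[OF \<sigma>(1), of v "fst a" "snd a"] mp[OF av] by simp
  have "x = ?b \<or> (x, ?b) \<in> TO" if nz: "sym_act \<sigma> v x \<noteq> 0" for x
  proof -
    obtain y where y: "v y \<noteq> 0" "x = (map \<sigma> (fst y), snd y)" using sym_act_nz[OF \<sigma>(1) nz] by blast
    then have x: "x = (map \<pi> (fst y), snd y)" using mp by simp
    from y(1) assms(2) have "y = a \<or> (y, a) \<in> TO" unfolding is_lt_def by blast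
    then show ?thesis using TO_map[OF _ assms(3), of y a] x by auto
  qed
  then have "is_lt (sym_act \<sigma> v) ?b" using vb av by (simp add: is_lt_def)
  then show ?thesis using vb \<sigma>(1) by blast
qed



definition domi :: "nat \<Rightarrow> idx \<Rightarrow> idx \<Rightarrow> bool" where
  "domi d a b \<longleftrightarrow> snd a = snd b \<and> length (fst a) = d \<and> length (fst b) = d \<and>
     (\<forall>p<d. fst a ! p \<le> fst b ! p) \<and>
     (\<forall>p<d. \<forall>q<d. (fst a ! p < fst a ! q \<longleftrightarrow> fst b ! p < fst b ! q) \<and>
        (fst a ! p < fst a ! q \<longrightarrow> fst a ! q - fst a ! p \<le> fst b ! q - fst b ! p))"

lemma domi_pi:
  assumes "domi d a b"
  shows "\<exists>\<pi>. strict_mono \<pi> \<and> (\<forall>n. n \<le> \<pi> n) \<and> map \<pi> (fst a) = fst b"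
proof -
  define xa where "xa = fst a"
  define xb where "xb = fst b"
  have la: "length xa = d" and lb: "length xb = d" and le: "\<And>p. p < d \<Longrightarrow> xa ! p \<le> xb ! p"
    and lt: "\<And>p q. p < d \<Longrightarrow> q < d \<Longrightarrow> (xa ! p < xa ! q \<longleftrightarrow> xb ! p < xb ! q)"
    and gap: "\<And>p q. p < d \<Longrightarrow> q < d \<Longrightarrow> xa ! p < xa ! q \<Longrightarrow> xa ! q - xa ! p \<le> xb ! q - xb ! p"
    using assms unfolding domi_def xa_def xb_def by auto
  define S where "S n = insert 0 ((\<lambda>p. xb ! p - xa ! p) ` {p. p < d \<and> xa ! p \<le> n})" for n
  define \<pi> where "\<pi> n = n + Max (S n)" for n
  have finS: "finite (S n)" for n unfolding S_def by simp
  have Smono: "S n \<subseteq> S (Suc n)" for n unfolding S_def by auto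
  have "Max (S n) \<le> Max (S (Suc n))" for n
    by (rule Max_mono[OF Smono]) (auto simp: finS S_def)
  then have "\<pi> n < \<pi> (Suc n)" for n unfolding \<pi>_def by (simp add: le_imp_less_Suc)
  then have sm: "strict_mono \<pi>" by (simp add: strict_mono_Suc_iff)
  have ge: "\<forall>n. n \<le> \<pi> n" by (simp add: \<pi>_def)
  have "\<pi> (xa ! q) = xb ! q" if q: "q < d" for q
  proof -
    have "Max (S (xa ! q)) = xb ! q - xa ! q"
    proof (rule Max_eqI[OF finS])
      fix y assume "y \<in> S (xa ! q)"
      then consider "y = 0" | p where "p < d" "xa ! p \<le> xa ! q" "y = xb ! p - xa ! p"
        unfolding S_def by auto
      then show "y \<le> xb ! q - xa ! q"
      proof cases
        case 1 then show ?thesis by simp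
      next
        case 2
        show ?thesis
        proof (cases "xa ! p < xa ! q")
          case True
          then have "xa ! q - xa ! p \<le> xb ! q - xb ! p" "xb ! p < xb ! q"
            using gap lt 2 q by auto
          then show ?thesis using 2 le[OF 2(1)] le[OF q] by linarith
        next
          case False
          then have "xa ! p = xa ! q" using 2 by simp
          then have "\<not> xb ! p < xb ! q" "\<not> xb ! q < xb ! p" using lt[OF 2(1) q] lt[OF q 2(1)] by auto
          then have "xb ! p = xb ! q" by linarith
          then show ?thesis using 2 \<open>xa ! p = xa ! q\<close> by simp
        qed
      qed
    next
      show "xb ! q - xa ! q \<in> S (xa ! q)" unfolding S_def using q by auto
    qed
    then show ?thesis unfolding \<pi>_def using le[OF q] by simp
  qed
  then have "map \<pi> xa = xb" using la lb by (intro nth_equalityI) auto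
  then show ?thesis using sm ge unfolding xa_def xb_def by blast
qed

lemma nat_mono_sub:
  fixes s :: "nat \<Rightarrow> nat"
  shows "\<exists>g::nat\<Rightarrow>nat. strict_mono g \<and> (\<forall>i j. i \<le> j \<longrightarrow> s (g i) \<le> s (g j))"
proof -
  define pos where "pos n = (SOME k. n \<le> k \<and> (\<forall>k'. n \<le> k' \<longrightarrow> s k \<le> s k'))" for n
  have pos: "n \<le> pos n \<and> (\<forall>k'. n \<le> k' \<longrightarrow> s (pos n) \<le> s k')" for n
  proof -
    have "\<exists>k. n \<le> k \<and> (\<forall>k'. n \<le> k' \<longrightarrow> s k \<le> s k')"
      using ex_has_least_nat[of "\<lambda>k. n \<le> k" n s] by simp
    then show ?thesis unfolding pos_def by (rule someI_ex)
  qed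
  define g where "g i = rec_nat (pos 0) (\<lambda>_ m. pos (Suc m)) i" for i
  have g0: "g 0 = pos 0" and gS: "g (Suc i) = pos (Suc (g i))" for i by (simp_all add: g_def)
  have "g i < g (Suc i)" for i using pos[of "Suc (g i)"] gS by simp
  then have sm: "strict_mono g" by (simp add: strict_mono_Suc_iff)
  have "s (g i) \<le> s (g (Suc i))" for i
  proof (cases i)
    case 0
    then show ?thesis using pos[of 0] g0 by simp
  next
    case (Suc i')
    have "Suc (g i') \<le> g i" using pos[of "Suc (g i')"] gS[of i'] Suc by simp
    moreover have "g i < g (Suc i)" by fact
    ultimately have "Suc (g i') \<le> g (Suc i)" by linarith
    then show ?thesis using pos[of "Suc (g i')"] gS[of i'] Suc by simp
  qed
  then have "\<forall>i j. i \<le> j \<longrightarrow> s (g i) \<le> s (g j)" using lift_Suc_mono_le[of "\<lambda>i. s (g i)"] by blast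
  with sm show ?thesis by blast
qed

lemma dickson:
  fixes x :: "nat \<Rightarrow> 'k \<Rightarrow> nat"
  assumes "finite K"
  shows "\<exists>h::nat\<Rightarrow>nat. strict_mono h \<and> (\<forall>i j k. i \<le> j \<longrightarrow> k \<in> K \<longrightarrow> x (h i) k \<le> x (h j) k)"
  using assms
proof (induction K rule: finite_induct)
  case empty
  then show ?case by (intro exI[of _ id]) (simp add: strict_mono_def)
next
  case (insert k0 K)
  then obtain h :: "nat \<Rightarrow> nat" where h: "strict_mono h" "\<forall>i j k. i \<le> j \<longrightarrow> k \<in> K \<longrightarrow> x (h i) k \<le> x (h j) k"
    by blast
  obtain g :: "nat \<Rightarrow> nat" where g: "strict_mono g" "\<forall>i j. i \<le> j \<longrightarrow> x (h (g i)) k0 \<le> x (h (g j)) k0"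
    using nat_mono_sub[of "\<lambda>n. x (h n) k0"] by blast
  have "strict_mono (h \<circ> g)" using h(1) g(1) by (simp add: strict_mono_def)
  moreover have "x ((h \<circ> g) i) k \<le> x ((h \<circ> g) j) k" if ij: "i \<le> j" "k \<in> insert k0 K" for i j k
  proof (cases "k = k0")
    case True then show ?thesis using g(2) ij(1) by simp
  next
    case False
    then have "k \<in> K" using ij(2) by simp
    moreover have "g i \<le> g j" using strict_mono_less_eq[OF g(1)] ij(1) by simp
    ultimately show ?thesis using h(2) by simp
  qed
  ultimately show ?case by (intro exI[of _ "h \<circ> g"]) blast
qed

lemma good_pair:
  fixes x :: "nat \<Rightarrow> 'k \<Rightarrow> nat"
  assumes "finite K" "finite (range f)"
  shows "\<exists>i j. i < j \<and> f i = f j \<and> (\<forall>k\<in>K. x i k \<le> x j k)"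
proof -
  obtain h :: "nat \<Rightarrow> nat" where h: "strict_mono h" "\<forall>i j k. i \<le> j \<longrightarrow> k \<in> K \<longrightarrow> x (h i) k \<le> x (h j) k"
    using dickson[OF assms(1)] by blast
  have "range (f \<circ> h) \<subseteq> range f" by auto
  then have "finite (range (f \<circ> h))" using assms(2) by (rule finite_subset)
  then have "\<not> inj (f \<circ> h)" using finite_imageD infinite_UNIV_nat by blast
  then obtain i j where ij: "i \<noteq> j" "f (h i) = f (h j)" unfolding inj_def by auto
  show ?thesis
  proof (cases "i < j")
    case True
    then show ?thesis using ij h strict_mono_less[OF h(1)] by (intro exI[of _ "h i"] exI[of _ "h j"]) auto
  next
    case False
    then have "j < i" using ij by simp
    then show ?thesis using ij h strict_mono_less[OF h(1)] by (intro exI[of _ "h j"] exI[of _ "h i"]) auto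
  qed
qed

lemma idx_props: "a \<in> index_set c d \<Longrightarrow> length (fst a) = d \<and> snd a \<le> c"
  by (cases a) (auto simp: index_set_def)

lemma domi_good:
  fixes b :: "nat \<Rightarrow> idx" and e :: "nat \<Rightarrow> nat"
  assumes "\<forall>n. b n \<in> index_set c d"
  shows "\<exists>i j. i < j \<and> domi d (b i) (b j) \<and> e i \<le> e j"
proof -
  define K where "K = {..d} \<times> {..d}"
  define x where "x n = (\<lambda>(p,q). if p < d \<and> q < d then fst (b n) ! q - fst (b n) ! p
      else if p < d then fst (b n) ! p else e n)" for n
  define f where "f n = (restrict (\<lambda>(p,q). fst (b n) ! p < fst (b n) ! q) ({..<d} \<times> {..<d}), snd (b n))"
    for n
  have bn: "length (fst (b n)) = d \<and> snd (b n) \<le> c" for n using assms idx_props by blast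
  have "range f \<subseteq> (PiE ({..<d} \<times> {..<d}) (\<lambda>_. UNIV)) \<times> {..c}"
    using bn unfolding f_def by auto
  moreover have "finite ((PiE ({..<d} \<times> {..<d}) (\<lambda>_. UNIV :: bool set)) \<times> {..c})"
    by (intro finite_cartesian_product finite_PiE) auto
  ultimately have "finite (range f)" by (rule finite_subset)
  then obtain i j where ij: "i < j" "f i = f j" "\<forall>k\<in>K. x i k \<le> x j k"
    using good_pair[of K f x] unfolding K_def by auto
  have len: "length (fst (b i)) = d" "length (fst (b j)) = d"
    using bn by auto
  have sn: "snd (b i) = snd (b j)" using ij(2) unfolding f_def by simp
  have cmp: "(fst (b i) ! p < fst (b i) ! q) = (fst (b j) ! p < fst (b j) ! q)" if "p < d" "q < d" for p q
    using fun_cong[OF arg_cong[OF ij(2), of fst], of "(p,q)"] that unfolding f_def by simp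
  have le1: "fst (b i) ! p \<le> fst (b j) ! p" if "p < d" for p
  proof -
    have "(p,d) \<in> K" using that unfolding K_def by auto
    then have "x i (p,d) \<le> x j (p,d)" using ij(3) by blast
    then show ?thesis using that unfolding x_def by simp
  qed
  have le2: "fst (b i) ! q - fst (b i) ! p \<le> fst (b j) ! q - fst (b j) ! p" if "p < d" "q < d" for p q
  proof -
    have "(p,q) \<in> K" using that unfolding K_def by auto
    then have "x i (p,q) \<le> x j (p,q)" using ij(3) by blast
    then show ?thesis using that unfolding x_def by simp
  qed
  have le3: "e i \<le> e j"
  proof -
    have "(d,d) \<in> K" unfolding K_def by auto
    then have "x i (d,d) \<le> x j (d,d)" using ij(3) by blast
    then show ?thesis unfolding x_def by simp
  qed
  have "domi d (b i) (b j)" unfolding domi_def using len sn cmp le1 le2 by auto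
  then show ?thesis using ij(1) le3 by blast
qed



fun bs :: "('a set \<Rightarrow> 'a) \<Rightarrow> nat \<Rightarrow> 'a list" where
  "bs ch 0 = []"
| "bs ch (Suc n) = bs ch n @ [ch (set (bs ch n))]"

lemma bs_map: "bs ch n = map (\<lambda>i. ch (set (bs ch i))) [0..<n]"
  by (induction n) auto

lemma bad_seq:
  assumes "\<And>F. finite F \<Longrightarrow> F \<subseteq> D \<Longrightarrow> \<exists>b\<in>D. \<forall>a\<in>F. \<not> P a b"
  shows "\<exists>s::nat\<Rightarrow>'a. (\<forall>n. s n \<in> D) \<and> (\<forall>i j. i < j \<longrightarrow> \<not> P (s i) (s j))"
proof -
  define ch where "ch F = (SOME b. b \<in> D \<and> (\<forall>a\<in>F. \<not> P a b))" for F
  have ch: "ch F \<in> D \<and> (\<forall>a\<in>F. \<not> P a (ch F))" if fin: "finite F" "F \<subseteq> D" for F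
  proof -
    obtain b where "b \<in> D" "\<forall>a\<in>F. \<not> P a b" using assms[OF fin] by blast
    then have "b \<in> D \<and> (\<forall>a\<in>F. \<not> P a b)" by blast
    then show ?thesis unfolding ch_def by (rule someI)
  qed
  define s where "s n = ch (set (bs ch n))" for n
  have st: "set (bs ch n) = s ` {..<n}" for n
  proof -
    have "set (bs ch n) = (\<lambda>i. ch (set (bs ch i))) ` {0..<n}" by (subst bs_map) simp
    then show ?thesis unfolding s_def by (simp add: lessThan_atLeast0)
  qed
  have sD: "s n \<in> D" for n
  proof (induction n rule: less_induct)
    case (less n)
    have "s ` {..<n} \<subseteq> D" using less by blast
    then have "set (bs ch n) \<subseteq> D" by (simp only: st)
    then have "ch (set (bs ch n)) \<in> D" using ch[of "set (bs ch n)"] by blast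
    then show ?case by (simp only: s_def)
  qed
  have "\<not> P (s i) (s j)" if ij: "i < j" for i j
  proof -
    have "s ` {..<j} \<subseteq> D" using sD by blast
    then have "set (bs ch j) \<subseteq> D" by (simp only: st)
    moreover have "s i \<in> set (bs ch j)" using ij by (simp only: st) blast
    ultimately have "\<not> P (s i) (ch (set (bs ch j)))" using ch[of "set (bs ch j)"] by blast
    moreover have e: "s j = ch (set (bs ch j))" by (rule s_def)
    ultimately show ?thesis by simp
  qed
  then show ?thesis using sD by blast
qed

context
  fixes c d :: nat and L :: "(idx \<Rightarrow> int) set"
  assumes lat: "is_lattice (index_set c d) L" and inv: "sym_invariant L"
begin

definition DD :: "idx set" where "DD = {b. \<exists>v\<in>L. is_lt v b}"
definition dd :: "idx \<Rightarrow> nat" where "dd b = (LEAST n. \<exists>v\<in>L. is_lt v b \<and> n = nat \<bar>v b\<bar>)"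

lemma L_free: "v \<in> L \<Longrightarrow> v \<in> free_ab (index_set c d)"
  using lat unfolding is_lattice_def by blast

lemma L_fin: "v \<in> L \<Longrightarrow> finite (supp v)"
  using L_free unfolding free_ab_def supp_def by blast

lemma dd_ex: "b \<in> DD \<Longrightarrow> \<exists>w\<in>L. is_lt w b \<and> nat \<bar>w b\<bar> = dd b"
  unfolding DD_def dd_def by (rule LeastI2_ex) auto

lemma dd_le: "v \<in> L \<Longrightarrow> is_lt v b \<Longrightarrow> dd b \<le> nat \<bar>v b\<bar>"
  unfolding dd_def by (rule Least_le) blast

lemma dd_dvd:
  assumes "v \<in> L" "is_lt v b"
  shows "int (dd b) dvd v b"
proof -
  have "b \<in> DD" using assms unfolding DD_def by blast
  then obtain w where w: "w \<in> L" "is_lt w b" "nat \<bar>w b\<bar> = dd b" using dd_ex by blast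
  have wb: "w b \<noteq> 0" using w(2) by (simp add: is_lt_def)
  define q where "q = v b div w b"
  define z where "z = (\<lambda>x. v x + (- q) * w x)"
  have zL: "z \<in> L" unfolding z_def by (rule lat_lin[OF lat assms(1) w(1)])
  have zb: "z b = v b mod w b" unfolding z_def q_def by (simp add: minus_div_mult_eq_mod[symmetric])
  have "v b mod w b = 0"
  proof (rule ccontr)
    assume nz: "v b mod w b \<noteq> 0"
    have "\<forall>x. z x \<noteq> 0 \<longrightarrow> x = b \<or> (x,b) \<in> TO"
    proof (intro allI impI)
      fix x assume "z x \<noteq> 0"
      then have "v x \<noteq> 0 \<or> w x \<noteq> 0" unfolding z_def by auto
      then show "x = b \<or> (x,b) \<in> TO" using assms(2) w(2) unfolding is_lt_def by blast
    qed
    then have "is_lt z b" using nz zb by (intro is_lt_at) auto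
    then have "dd b \<le> nat \<bar>z b\<bar>" using dd_le zL by blast
    moreover have "\<bar>v b mod w b\<bar> < \<bar>w b\<bar>" using wb by (rule abs_mod_less)
    ultimately show False using zb w(3) by linarith
  qed
  then have "w b dvd v b" by presburger
  moreover have "int (dd b) = \<bar>w b\<bar>" using w(3) by simp
  ultimately show ?thesis by simp
qed

lemma transport_L:
  assumes "v \<in> L" "is_lt v a" "domi d a b"
  shows "\<exists>\<sigma>\<in>Sym. sym_act \<sigma> v \<in> L \<and> is_lt (sym_act \<sigma> v) b \<and> sym_act \<sigma> v b = v a"
proof -
  obtain \<pi> where \<pi>: "strict_mono \<pi>" "\<forall>n. n \<le> \<pi> n" "map \<pi> (fst a) = fst b"
    using domi_pi[OF assms(3)] by blast
  have bb: "b = (map \<pi> (fst a), snd a)" using \<pi>(3) assms(3) unfolding domi_def by (cases b) auto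
  obtain \<sigma> where \<sigma>: "\<sigma> \<in> Sym" "is_lt (sym_act \<sigma> v) b" "sym_act \<sigma> v b = v a"
    using transport[OF L_free[OF assms(1)] assms(2) \<pi>(1,2)] unfolding bb[symmetric] by blast
  have "sym_act \<sigma> v \<in> L" using inv \<sigma>(1) assms(1) unfolding sym_invariant_def by blast
  then show ?thesis using \<sigma> by blast
qed

lemma dd_mono:
  assumes "a \<in> DD" "domi d a b"
  shows "b \<in> DD \<and> dd b \<le> dd a"
proof -
  obtain w where w: "w \<in> L" "is_lt w a" "nat \<bar>w a\<bar> = dd a" using dd_ex assms(1) by blast
  obtain \<sigma> where "\<sigma> \<in> Sym" "sym_act \<sigma> w \<in> L" "is_lt (sym_act \<sigma> w) b" "sym_act \<sigma> w b = w a"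
    using transport_L[OF w(1,2) assms(2)] by blast
  then show ?thesis using dd_le[of "sym_act \<sigma> w" b] w(3) unfolding DD_def by auto
qed

lemma DD_idx: "b \<in> DD \<Longrightarrow> b \<in> index_set c d"
proof -
  assume "b \<in> DD"
  then obtain v where "v \<in> L" "is_lt v b" unfolding DD_def by blast
  then show ?thesis using L_free unfolding free_ab_def is_lt_def by blast
qed

lemma finite_basis:
  "\<exists>F. finite F \<and> F \<subseteq> DD \<and> (\<forall>b\<in>DD. \<exists>a\<in>F. domi d a b \<and> dd a = dd b)"
proof (rule ccontr)
  assume na: "\<not> ?thesis"
  have "\<exists>b\<in>DD. \<forall>a\<in>F. \<not> (domi d a b \<and> dd a = dd b)" if "finite F" "F \<subseteq> DD" for F
  proof (rule ccontr)
    assume "\<not> (\<exists>b\<in>DD. \<forall>a\<in>F. \<not> (domi d a b \<and> dd a = dd b))"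
    then have "\<forall>b\<in>DD. \<exists>a\<in>F. domi d a b \<and> dd a = dd b" by blast
    then show False using na that by blast
  qed
  then obtain s :: "nat \<Rightarrow> idx" where s: "\<forall>n. s n \<in> DD" "\<forall>i j. i < j \<longrightarrow> \<not> (domi d (s i) (s j) \<and> dd (s i) = dd (s j))"
    using bad_seq[of DD "\<lambda>a b. domi d a b \<and> dd a = dd b"] by blast
  have "\<forall>n. s n \<in> index_set c d" using s(1) DD_idx by blast
  then obtain i j where ij: "i < j" "domi d (s i) (s j)" "dd (s i) \<le> dd (s j)"
    using domi_good[of s c d "\<lambda>n. dd (s n)"] by blast
  have "dd (s j) \<le> dd (s i)" using dd_mono[OF s(1)[rule_format, of i] ij(2)] by blast
  then have "dd (s i) = dd (s j)" using ij(3) by linarith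
  then show False using s(2) ij(1,2) by blast
qed

lemma main_ctx: "\<exists>B. finite B \<and> B \<subseteq> L \<and> L = int_span (Sym_orbit B)"
proof -
  obtain F where F: "finite F" "F \<subseteq> DD" "\<forall>b\<in>DD. \<exists>a\<in>F. domi d a b \<and> dd a = dd b"
    using finite_basis by blast
  define wF where "wF a = (SOME w. w \<in> L \<and> is_lt w a \<and> nat \<bar>w a\<bar> = dd a)" for a
  have wF: "wF a \<in> L \<and> is_lt (wF a) a \<and> nat \<bar>wF a a\<bar> = dd a" if "a \<in> F" for a
  proof -
    have "\<exists>w. w \<in> L \<and> is_lt w a \<and> nat \<bar>w a\<bar> = dd a" using dd_ex F(2) that by blast
    then show ?thesis unfolding wF_def by (rule someI_ex)
  qed
  define B where "B = wF ` F"
  have BL: "B \<subseteq> L" unfolding B_def using wF by blast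
  have OL: "Sym_orbit B \<subseteq> L" using inv BL unfolding Sym_orbit_def sym_invariant_def by blast
  let ?S = "int_span (Sym_orbit B)"
  have step: "\<forall>v\<in>L. is_lt v b \<longrightarrow> v \<in> ?S" for b
  proof (induction b rule: wf_induct[OF wf_TO])
    case (1 b)
    show ?case
    proof (intro ballI impI)
      fix v assume vL: "v \<in> L" and vb: "is_lt v b"
      have "b \<in> DD" using vL vb unfolding DD_def by blast
      then obtain a where a: "a \<in> F" "domi d a b" "dd a = dd b" using F(3) by blast
      define w where "w = wF a"
      have w: "w \<in> L" "is_lt w a" "nat \<bar>w a\<bar> = dd b" using wF[OF a(1)] a(3) unfolding w_def by auto
      obtain \<sigma> where \<sigma>: "\<sigma> \<in> Sym" "sym_act \<sigma> w \<in> L" "is_lt (sym_act \<sigma> w) b" "sym_act \<sigma> w b = w a"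
        using transport_L[OF w(1,2) a(2)] by blast
      define u where "u = sym_act \<sigma> w"
      have uS: "u \<in> Sym_orbit B" unfolding u_def Sym_orbit_def B_def w_def using \<sigma>(1) a(1) by blast
      have uL: "u \<in> L" "is_lt u b" "u b = w a" using \<sigma> unfolding u_def by auto
      have "int (dd b) dvd v b" by (rule dd_dvd[OF vL vb])
      moreover have "int (dd b) = \<bar>w a\<bar>" using w(3) by simp
      ultimately have dv: "u b dvd v b" using uL(3) by simp
      define q where "q = v b div u b"
      have vq: "v b = q * u b" using dv unfolding q_def by simp
      define v' where "v' = (\<lambda>x. v x + (- q) * u x)"
      have v'L: "v' \<in> L" unfolding v'_def by (rule lat_lin[OF lat vL uL(1)])
      have v'b: "v' b = 0" unfolding v'_def using vq by simp
      have vv: "v = (\<lambda>x. v' x + q * u x)" unfolding v'_def by simp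
      have "v' \<in> ?S"
      proof (cases "v' = 0")
        case True then show ?thesis using span_zero by simp
      next
        case False
        have below: "\<forall>x. v' x \<noteq> 0 \<longrightarrow> x = b \<or> (x,b) \<in> TO"
        proof (intro allI impI)
          fix x assume "v' x \<noteq> 0"
          then have "v x \<noteq> 0 \<or> u x \<noteq> 0" unfolding v'_def by auto
          then show "x = b \<or> (x,b) \<in> TO" using vb uL(2) unfolding is_lt_def by blast
        qed
        obtain b' where b': "is_lt v' b'" "b' = b \<or> (b',b) \<in> TO"
          using is_lt_below[OF below L_fin[OF v'L] False] by blast
        have "b' \<noteq> b" using b'(1) v'b unfolding is_lt_def by auto
        then have "(b',b) \<in> TO" using b'(2) by blast
        then show ?thesis using 1 v'L b'(1) by blast
      qed
      then have "(\<lambda>x. v' x + q * u x) \<in> ?S" using uS by (rule span_add)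
      then show "v \<in> ?S" using vv by simp
    qed
  qed
  have "L \<subseteq> ?S"
  proof
    fix v assume vL: "v \<in> L"
    show "v \<in> ?S"
    proof (cases "v = 0")
      case True then show ?thesis using span_zero by simp
    next
      case False
      then obtain b where "is_lt v b" using exists_lt L_fin[OF vL] by blast
      then show ?thesis using step vL by blast
    qed
  qed
  moreover have "?S \<subseteq> L" by (rule span_sub[OF lat OL])
  ultimately show ?thesis using F(1) BL unfolding B_def by blast
qed

end

theorem theorem5p1:
  fixes c d :: nat and L :: "(idx \<Rightarrow> int) set"
  assumes "1 \<le> c" and "1 \<le> d"
    and "is_lattice (index_set c d) L"
    and "sym_invariant L"
  shows "\<exists>B. finite B \<and> B \<subseteq> L \<and> L = int_span (Sym_orbit B)"
  using main_ctx[OF assms(3,4)] .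


end
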